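(* Let $p\in(1,\infty)$ and $n_1,n_2\in\mathbb N$ with $n_1\le n_2$. If $\mathbb H^{n_2}\in\mathbb T^{n_2}_p(\tau,m)$ with $\tau>0$, then $$\mathbb H^{n_1}(\mathbb H^{n_2}):=\Big\{\frac{\boldsymbol z}{\|\boldsymbol z\|_p}:\boldsymbol z\in\mathbb R^{n_1},\ \boldsymbol z\ne\boldsymbol0,\ \boldsymbol z\vee\boldsymbol y\in\mathbb H^{n_2}\text{ for some }\boldsymbol y\in\mathbb R^{n_2-n_1}\Big\}\in\mathbb T^{n_1}_p(\tau,m).$$
   Context: $1/p+1/q=1$; $\mathbb S^N_p$ unit $\ell_p$-sphere in $\mathbb R^N$; $\mathbb T^N_p(\tau,m)$ the family of $\mathbb H\subseteq\mathbb S^N_p$ with $|\mathbb H|\le m$ such that every $\boldsymbol x\in\mathbb S^N_q$ has $\boldsymbol v\in\mathbb H$ with $\boldsymbol x^{\mathrm T}\boldsymbol v\ge\tau$. $\boldsymbol z\vee\boldsymbol y$ is the concatenation of vectors. *)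

theory Defs
  imports Complex_Main
begin

text \<open>Vectors in R^N are represented as real lists of length N; concatenation
  of vectors is list append.\<close>

definition lpnorm :: "real \<Rightarrow> real list \<Rightarrow> real" where
  "lpnorm p x = (\<Sum>i<length x. \<bar>x ! i\<bar> powr p) powr (1 / p)"

definition ldot :: "real list \<Rightarrow> real list \<Rightarrow> real" where
  "ldot x v = (\<Sum>i<length x. x ! i * v ! i)"

definition conj_exp :: "real \<Rightarrow> real" where
  "conj_exp p = p / (p - 1)"

definition lsphere :: "nat \<Rightarrow> real \<Rightarrow> real list set" where
  "lsphere N p = {x. length x = N \<and> lpnorm p x = 1}"

definition Tfam :: "nat \<Rightarrow> real \<Rightarrow> real \<Rightarrow> nat \<Rightarrow> real list set set" where
  "Tfam N p \<tau> m = {H. H \<subseteq> lsphere N p \<and> finite H \<and> card H \<le> m \<and>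
      (\<forall>x\<in>lsphere N (conj_exp p). \<exists>v\<in>H. ldot x v \<ge> \<tau>)}"

definition Hproj :: "nat \<Rightarrow> nat \<Rightarrow> real \<Rightarrow> real list set \<Rightarrow> real list set" where
  "Hproj n1 n2 p H = {map (\<lambda>t. t / lpnorm p z) z | z. length z = n1 \<and> z \<noteq> replicate n1 0 \<and>
      (\<exists>y. length y = n2 - n1 \<and> z @ y \<in> H)}"

end

theory Submission imports Defs begin

lemma sum_nth_list: "(\<Sum>i<length x. f (x ! i)) = sum_list (map f x)"
  by (simp add: sum_list_sum_nth atLeast0LessThan)

lemma lpnorm_list: "lpnorm p x = (sum_list (map (\<lambda>t. \<bar>t\<bar> powr p) x)) powr (1/p)"
  unfolding lpnorm_def using sum_nth_list[of "\<lambda>t. \<bar>t\<bar> powr p" x] by simp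

lemma split_sum: "(\<Sum>i<a+b. g i) = (\<Sum>i<a. g i) + (\<Sum>i\<in>{a..<a+b}. g i)" for g :: "nat \<Rightarrow> real"
  by (metis atLeast0LessThan le_add1 sum.atLeastLessThan_concat zero_le)

lemma ldot_app: assumes "length x = length z" "length y = k"
  shows "ldot (x @ replicate k 0) (z @ y) = ldot x z"
proof -
  have "ldot (x @ replicate k 0) (z @ y) = (\<Sum>i<length x + k. (x @ replicate k 0) ! i * (z @ y) ! i)"
    by (simp add: ldot_def)
  also have "\<dots> = (\<Sum>i<length x. (x @ replicate k 0) ! i * (z @ y) ! i)"
    unfolding split_sum by (simp add: nth_append, intro sum.neutral) auto
  also have "\<dots> = ldot x z" using assms by (simp add: ldot_def nth_append)
  finally show ?thesis .
qed

lemma lpnorm_app_zero: "lpnorm q (x @ replicate k 0) = lpnorm q x"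
  by (simp add: lpnorm_list sum_list_replicate)

lemma sumlist_nonneg: "0 \<le> sum_list (map (\<lambda>t. \<bar>t\<bar> powr (p::real)) y)"
  by (induction y) (auto intro: add_nonneg_nonneg)

lemma lpnorm_take_le: assumes "1 < p" "lpnorm p v = 1"
  shows "lpnorm p (take n v) \<le> 1"
proof -
  let ?S = "\<lambda>x. sum_list (map (\<lambda>t. \<bar>t\<bar> powr p) x)"
  have "?S v = ?S (take n v) + ?S (drop n v)"
    by (metis append_take_drop_id map_append sum_list_append)
  hence le: "?S (take n v) \<le> ?S v" using sumlist_nonneg[of p "drop n v"] by linarith
  have "?S v = 1"
  proof -
    have "?S v = (?S v powr (1/p)) powr p" using assms sumlist_nonneg[of p v]
      by (simp add: powr_powr)
    thus ?thesis using assms by (simp add: lpnorm_list)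
  qed
  hence "?S (take n v) powr (1/p) \<le> 1 powr (1/p)"
    using le sumlist_nonneg[of p "take n v"] assms by (intro powr_mono2) auto
  thus ?thesis by (simp add: lpnorm_list)
qed

lemma lpnorm_scale: assumes "1 < p" "c > 0"
  shows "lpnorm p (map (\<lambda>t. t / c) z) = lpnorm p z / c"
proof -
  have "sum_list (map (\<lambda>t. \<bar>t / c\<bar> powr p) z) = sum_list (map (\<lambda>t. \<bar>t\<bar> powr p) z) / c powr p"
    using assms by (induction z) (auto simp: powr_divide add_divide_distrib)
  hence "lpnorm p (map (\<lambda>t. t / c) z) = (sum_list (map (\<lambda>t. \<bar>t\<bar> powr p) z) / c powr p) powr (1/p)"
    by (simp add: lpnorm_list o_def)
  also have "\<dots> = lpnorm p z / (c powr p) powr (1/p)"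
    using assms sumlist_nonneg[of p z] by (simp add: lpnorm_list powr_divide)
  also have "(c powr p) powr (1/p) = c" using assms by (simp add: powr_powr)
  finally show ?thesis .
qed

lemma lpnorm_pos: assumes "1 < p" "z \<noteq> replicate (length z) 0"
  shows "lpnorm p z > 0"
proof -
  obtain t where t: "t \<in> set z" "t \<noteq> 0" using assms(2)
    by (metis in_set_replicate replicate_length_same)
  have "0 < \<bar>t\<bar> powr p" using t by simp
  also have "\<bar>t\<bar> powr p \<le> sum_list (map (\<lambda>t. \<bar>t\<bar> powr p) z)"
    using t(1) by (intro member_le_sum_list) auto
  finally show ?thesis by (simp add: lpnorm_list)
qed


theorem lemma4p7:
  fixes p \<tau> :: real and n1 n2 m :: nat and H :: "real list set"
  assumes "1 < p" and "n1 \<le> n2" and "\<tau> > 0"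
    and "H \<in> Tfam n2 p \<tau> m"
  shows "Hproj n1 n2 p H \<in> Tfam n1 p \<tau> m"
proof -
  have HS: "H \<subseteq> lsphere n2 p" and Hf: "finite H" and Hc: "card H \<le> m"
    and Hcov: "\<forall>x\<in>lsphere n2 (conj_exp p). \<exists>v\<in>H. ldot x v \<ge> \<tau>"
    using assms(4) by (auto simp: Tfam_def)
  define g where "g = (\<lambda>w::real list. map (\<lambda>t. t / lpnorm p (take n1 w)) (take n1 w))"
  have sub: "Hproj n1 n2 p H \<subseteq> g ` H"
  proof
    fix u assume "u \<in> Hproj n1 n2 p H"
    then obtain z y where u: "u = map (\<lambda>t. t / lpnorm p z) z" and z: "length z = n1"
      and "z @ y \<in> H" unfolding Hproj_def by blast
    then have "u = g (z @ y)" by (simp add: g_def)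
    thus "u \<in> g ` H" using \<open>z @ y \<in> H\<close> by blast
  qed
  have fin: "finite (Hproj n1 n2 p H)" using sub Hf by (meson finite_surj)
  have card: "card (Hproj n1 n2 p H) \<le> m"
    using card_mono[OF finite_imageI[OF Hf] sub] card_image_le[OF Hf, of g] Hc by linarith
  have sph: "Hproj n1 n2 p H \<subseteq> lsphere n1 p"
  proof
    fix u assume "u \<in> Hproj n1 n2 p H"
    then obtain z where u: "u = map (\<lambda>t. t / lpnorm p z) z" and z: "length z = n1"
      and nz: "z \<noteq> replicate n1 0" unfolding Hproj_def by blast
    have pos: "lpnorm p z > 0" using lpnorm_pos[OF assms(1)] nz z by simp
    show "u \<in> lsphere n1 p" using lpnorm_scale[OF assms(1) pos] pos z u
      by (simp add: lsphere_def)
  qed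
  have cov: "\<forall>x\<in>lsphere n1 (conj_exp p). \<exists>v\<in>Hproj n1 n2 p H. ldot x v \<ge> \<tau>"
  proof
    fix x assume x: "x \<in> lsphere n1 (conj_exp p)"
    let ?x = "x @ replicate (n2 - n1) 0"
    have "?x \<in> lsphere n2 (conj_exp p)" using x assms(2)
      by (simp add: lsphere_def lpnorm_app_zero)
    then obtain v where v: "v \<in> H" "ldot ?x v \<ge> \<tau>" using Hcov by blast
    have vl: "length v = n2" "lpnorm p v = 1" using v HS by (auto simp: lsphere_def)
    define z where "z = take n1 v"
    define y where "y = drop n1 v"
    have zl: "length z = n1" and yl: "length y = n2 - n1" using vl assms(2) by (auto simp: z_def y_def)
    have vzy: "v = z @ y" by (simp add: z_def y_def)
    have dz: "ldot x z \<ge> \<tau>" using v(2) ldot_app[of x z y "n2 - n1"] zl yl x vzy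
      by (simp add: lsphere_def)
    have nz: "z \<noteq> replicate n1 0"
    proof
      assume "z = replicate n1 0"
      hence "ldot x z = 0" using x by (simp add: ldot_def lsphere_def)
      thus False using dz assms(3) by linarith
    qed
    have pos: "lpnorm p z > 0" using lpnorm_pos[OF assms(1)] nz zl by simp
    have le1: "lpnorm p z \<le> 1" using lpnorm_take_le[OF assms(1) vl(2)] by (simp add: z_def)
    let ?w = "map (\<lambda>t. t / lpnorm p z) z"
    have wH: "?w \<in> Hproj n1 n2 p H" unfolding Hproj_def using zl nz yl vzy v(1) by blast
    have "ldot x ?w = ldot x z / lpnorm p z"
      using zl x by (simp add: ldot_def lsphere_def sum_divide_distrib)
    also have "\<dots> \<ge> ldot x z"
    proof -
      have "ldot x z * 1 \<le> ldot x z * (1 / lpnorm p z)"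
        using dz assms(3) le1 pos by (intro mult_left_mono) (auto simp: field_simps)
      thus ?thesis by simp
    qed
    finally show "\<exists>v\<in>Hproj n1 n2 p H. ldot x v \<ge> \<tau>" using wH dz by (meson order_trans)
  qed
  show ?thesis using fin card sph cov by (simp add: Tfam_def)
qed

end
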